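(* Let there be $p$ predictors $X_1,\dots,X_p$ and let $\widehat{m}^{(1)},\dots,\widehat{m}^{(B)}\subseteq\{1,\dots,p\}$ be bootstrap models, i.e. independent realizations of a random selected model. Fix a width $w\in\{0,\dots,p\}$. Let $\{\widehat{m}_{L,1},\widehat{m}_{U,1}\}$ be a maximizer of $\widehat{r}(m_1,m_2)$ over all pairs with $m_1\subseteq m_2\subseteq\{1,\dots,p\}$ and $|m_2|-|m_1|=w$ (Algorithm 1). Let $\overline{\pi}_j=\frac1B\sum_{b=1}^B I(j\in\widehat{m}^{(b)})$, let $(u_1,\dots,u_p)$ be the ordering of $\{1,\dots,p\}$ with $\overline{\pi}_{u_1}>\cdots>\overline{\pi}_{u_p}$ (assuming no ties), and let $\{\widehat{m}_{L,2},\widehat{m}_{U,2}\}=\{\{u_1,\dots,u_{k^\ast}\},\{u_1,\dots,u_{k^\ast+w}\}\}$ where $k^\ast$ maximizes $\widehat{r}(\{u_1,\dots,u_k\},\{u_1,\dots,u_{k+w}\})$ over $0\le k\le p-w$ (Algorithm 2). Assume (A.3): the events $I(X_j)$, $j=1,\dots,p$, are mutually independent, where $I(X_j)$ denotes the event that $X_j$ is selected in the model (i.e. $j$ belongs to the random selected model). Then, as $B\to\infty$, $$\left|\widehat{r}(\widehat{m}_{L,1},\widehat{m}_{U,1})-\widehat{r}(\widehat{m}_{L,2},\widehat{m}_{U,2})\right|=o_p(1).$$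
   Context: Models are identified with index sets of predictors, i.e. subsets of $\{1,\dots,p\}$; $|m|$ denotes cardinality. For nested models $m_1\subseteq m_2$, the bootstrap coverage rate is $\widehat{r}(m_1,m_2)=\frac1B\sum_{b=1}^B I(m_1\subseteq\widehat{m}^{(b)}\subseteq m_2)$, with $I(\cdot)$ the indicator function. *)

theory Defs
  imports "HOL-Probability.Probability"
begin

definition cov_rate :: "nat \<Rightarrow> (nat \<Rightarrow> nat set) \<Rightarrow> nat set \<Rightarrow> nat set \<Rightarrow> real" where
  "cov_rate B ms m1 m2 = (\<Sum>b<B. if m1 \<subseteq> ms b \<and> ms b \<subseteq> m2 then 1 else 0) / real B"

definition incl_freq :: "nat \<Rightarrow> (nat \<Rightarrow> nat set) \<Rightarrow> nat \<Rightarrow> real" where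
  "incl_freq B ms j = (\<Sum>b<B. if j \<in> ms b then 1 else 0) / real B"

definition boot_sample :: "nat set pmf \<Rightarrow> nat \<Rightarrow> (nat \<Rightarrow> nat set) pmf" where
  "boot_sample D B = Pi_pmf {..<B} {} (\<lambda>_. D)"

end

theory Submission
  imports Defs "HOL-Real_Asymp.Real_Asymp"
begin

lemma map_bern:
  "map_pmf P D = bernoulli_pmf (measure_pmf.prob D {m. P m})"
proof (rule pmf_eqI)
  fix b :: bool
  have q: "0 \<le> measure_pmf.prob D {m. P m}" "measure_pmf.prob D {m. P m} \<le> 1" by auto
  show "pmf (map_pmf P D) b = pmf (bernoulli_pmf (measure_pmf.prob D {m. P m})) b"
  proof (cases b)
    case True
    then show ?thesis using q by (simp add: pmf_map vimage_def)
  next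
    case False
    have "measure_pmf.prob D {m. \<not> P m} = 1 - measure_pmf.prob D {m. P m}"
      using measure_pmf.prob_compl[of "{m. P m}" D] by (simp add: Compl_eq_Diff_UNIV[symmetric] Collect_neg_eq)
    then show ?thesis using q False by (simp add: pmf_map vimage_def)
  qed
qed

lemma binom_boot:
  "map_pmf (\<lambda>ms. card {b\<in>{..<B}. P (ms b)}) (boot_sample D B)
   = binomial_pmf B (measure_pmf.prob D {m. P m})"
proof -
  let ?q = "measure_pmf.prob D {m. P m}"
  have "binomial_pmf B ?q = map_pmf (\<lambda>f. card {x\<in>{..<B}. f x}) (Pi_pmf {..<B} (P {}) (\<lambda>_. bernoulli_pmf ?q))"
    by (rule binomial_pmf_altdef') auto
  also have "Pi_pmf {..<B} (P {}) (\<lambda>_. bernoulli_pmf ?q) = Pi_pmf {..<B} (P {}) (\<lambda>_. map_pmf P D)"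
    by (simp add: map_bern)
  also have "\<dots> = map_pmf (\<lambda>h. P \<circ> h) (Pi_pmf {..<B} {} (\<lambda>_. D))"
    by (rule Pi_pmf_map) auto
  finally show ?thesis by (simp add: boot_sample_def pmf.map_comp o_def)
qed

lemma conc:
  assumes d: "d > 0"
  shows "(\<lambda>B. measure_pmf.prob (boot_sample D B)
     {ms. d \<le> \<bar>(\<Sum>b<B. if P (ms b) then 1 else 0) / real B - measure_pmf.prob D {m. P m}\<bar>}) \<longlonglongrightarrow> 0"
proof (rule Lim_null_comparison)
  let ?q = "measure_pmf.prob D {m. P m}"
  show "(\<lambda>B::nat. 2 * exp (-2 * real B * d\<^sup>2)) \<longlonglongrightarrow> 0" using d by real_asymp
  show "\<forall>\<^sub>F B in sequentially. norm (measure_pmf.prob (boot_sample D B)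
     {ms. d \<le> \<bar>(\<Sum>b<B. if P (ms b) then 1 else 0) / real B - ?q\<bar>}) \<le> 2 * exp (-2 * real B * d\<^sup>2)"
  proof (rule eventually_sequentiallyI[of 1])
    fix B :: nat assume B: "1 \<le> B"
    have eq1: "(\<Sum>b<B. if P (ms b) then 1 else 0) = real (card {b\<in>{..<B}. P (ms b)})" for ms
    proof -
      have "(\<Sum>b<B. if P (ms b) then 1 else (0::real)) = (\<Sum>b\<in>{b\<in>{..<B}. P (ms b)}. 1)"
        by (intro sum.mono_neutral_cong_right) auto
      thus ?thesis by simp
    qed
    have "measure_pmf.prob (boot_sample D B)
     {ms. d \<le> \<bar>(\<Sum>b<B. if P (ms b) then 1 else 0) / real B - ?q\<bar>}
      = measure_pmf.prob (map_pmf (\<lambda>ms. card {b\<in>{..<B}. P (ms b)}) (boot_sample D B))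
           {x. d \<le> \<bar>real x / real B - ?q\<bar>}"
      by (simp add: measure_map_pmf vimage_def eq1)
    also have "\<dots> = measure_pmf.prob (binomial_pmf B ?q) {x. d \<le> \<bar>real x / real B - ?q\<bar>}"
      by (simp only: binom_boot)
    also have "\<dots> \<le> 2 * exp (real_of_int (- 2 * int B) * d\<^sup>2)"
      by (rule binomial_distribution.prob_abs_ge') (use B d in \<open>auto simp: binomial_distribution_def\<close>)
    finally show "norm (measure_pmf.prob (boot_sample D B)
     {ms. d \<le> \<bar>(\<Sum>b<B. if P (ms b) then 1 else 0) / real B - ?q\<bar>}) \<le> 2 * exp (-2 * real B * d\<^sup>2)"
      by simp
  qed
qed
lemma indep_prod:
  fixes D :: "nat set pmf"
  assumes D_supp: "\<forall>m \<in> set_pmf D. m \<subseteq> {1..p}"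
    and A3: "prob_space.indep_events (measure_pmf D) (\<lambda>j. {m. j \<in> m}) {1..p}"
    and m12: "m1 \<subseteq> m2" "m2 \<subseteq> {1..p}"
  shows "measure_pmf.prob D {m. m1 \<subseteq> m \<and> m \<subseteq> m2}
    = (\<Prod>j\<in>m1. measure_pmf.prob D {m. j \<in> m}) * (\<Prod>j\<in>{1..p}-m2. 1 - measure_pmf.prob D {m. j \<in> m})"
proof -
  define E where "E j = (if j \<in> m1 then {m. j \<in> m} else {m. j \<notin> m})" for j :: nat
  define J where "J = m1 \<union> ({1..p}-m2)"
  have finJ: "finite J" and Jsub: "J \<subseteq> {1..p}" using m12 by (auto simp: J_def intro: finite_subset)
  have disj: "m1 \<inter> ({1..p}-m2) = {}" using m12 by auto
  have fin1: "finite m1" "finite ({1..p}-m2)" using m12 by (auto intro: finite_subset)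
  have "{m. m1 \<subseteq> m \<and> m \<subseteq> m2} \<inter> set_pmf D = (\<Inter>j\<in>J. E j) \<inter> set_pmf D"
  proof (rule set_eqI, rule iffI)
    fix m assume "m \<in> {m. m1 \<subseteq> m \<and> m \<subseteq> m2} \<inter> set_pmf D"
    then show "m \<in> (\<Inter>j\<in>J. E j) \<inter> set_pmf D" unfolding J_def E_def by auto
  next
    fix m assume m: "m \<in> (\<Inter>j\<in>J. E j) \<inter> set_pmf D"
    hence ms: "m \<subseteq> {1..p}" using D_supp by auto
    have "m1 \<subseteq> m"
    proof
      fix j assume "j \<in> m1" thus "j \<in> m" using m unfolding J_def E_def by auto
    qed
    moreover have "m \<subseteq> m2"
    proof
      fix j assume jm: "j \<in> m"
      show "j \<in> m2"
      proof (rule ccontr)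
        assume "j \<notin> m2"
        hence "j \<in> J" "j \<notin> m1" using jm ms m12 unfolding J_def by auto
        thus False using m jm unfolding E_def by auto
      qed
    qed
    ultimately show "m \<in> {m. m1 \<subseteq> m \<and> m \<subseteq> m2} \<inter> set_pmf D" using m by auto
  qed
  hence eq1: "measure_pmf.prob D {m. m1 \<subseteq> m \<and> m \<subseteq> m2} = measure_pmf.prob D (\<Inter>j\<in>J. E j)"
    by (metis measure_Int_set_pmf)
  have compl: "measure_pmf.prob D {m. j \<notin> m} = 1 - measure_pmf.prob D {m. j \<in> m}" for j
    using measure_pmf.prob_compl[of "{m. j \<in> m}" D] by (simp add: Compl_eq_Diff_UNIV[symmetric] Collect_neg_eq)
  have eq2: "measure_pmf.prob D (\<Inter>j\<in>J. E j) = (\<Prod>j\<in>J. measure_pmf.prob D (E j))"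
  proof (cases "J = {}")
    case True then show ?thesis by simp
  next
    case False
    have ind: "prob_space.indep_sets (measure_pmf D) (\<lambda>j. {{m. j \<in> m}}) {1..p}"
      using A3 by (simp add: prob_space.indep_events_def_alt[OF measure_pmf.prob_space_axioms])
    have "prob_space.indep_sets (measure_pmf D) (\<lambda>j. sigma_sets (space (measure_pmf D)) {{m. j \<in> m}}) {1..p}"
      by (rule prob_space.indep_sets_sigma[OF measure_pmf.prob_space_axioms ind]) (auto simp: Int_stable_def)
    hence ind2: "prob_space.indep_sets (measure_pmf D) (\<lambda>j. sigma_sets UNIV {{m. j \<in> m}}) {1..p}" by simp
    have EJ: "E \<in> Pi J (\<lambda>j. sigma_sets UNIV {{m. j \<in> m}})"
    proof
      fix j assume "j \<in> J"
      show "E j \<in> sigma_sets UNIV {{m. j \<in> m}}"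
      proof (cases "j \<in> m1")
        case True then show ?thesis by (auto simp: E_def)
      next
        case False
        have "UNIV - {m. j \<in> m} \<in> sigma_sets UNIV {{m. j \<in> m}}"
          by (rule sigma_sets.Compl) auto
        moreover have "UNIV - {m. j \<in> m} = {m. j \<notin> m}" by auto
        ultimately show ?thesis using False by (simp add: E_def)
      qed
    qed
    show ?thesis
      using ind2 False finJ Jsub EJ
      unfolding prob_space.indep_sets_def[OF measure_pmf.prob_space_axioms] by blast
  qed
  have "(\<Prod>j\<in>J. measure_pmf.prob D (E j)) = (\<Prod>j\<in>m1. measure_pmf.prob D (E j)) * (\<Prod>j\<in>{1..p}-m2. measure_pmf.prob D (E j))"
    unfolding J_def using fin1 disj by (rule prod.union_disjoint)
  also have "\<dots> = (\<Prod>j\<in>m1. measure_pmf.prob D {m. j \<in> m}) * (\<Prod>j\<in>{1..p}-m2. 1 - measure_pmf.prob D {m. j \<in> m})"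
  proof -
    have "(\<Prod>j\<in>m1. measure_pmf.prob D (E j)) = (\<Prod>j\<in>m1. measure_pmf.prob D {m. j \<in> m})"
      by (rule prod.cong) (auto simp: E_def)
    moreover have "(\<Prod>j\<in>{1..p}-m2. measure_pmf.prob D (E j)) = (\<Prod>j\<in>{1..p}-m2. 1 - measure_pmf.prob D {m. j \<in> m})"
      by (rule prod.cong) (use m12 in \<open>auto simp: E_def compl\<close>)
    ultimately show ?thesis by simp
  qed
  finally show ?thesis using eq1 eq2 by simp
qed
lemma exch:
  fixes f :: "nat \<Rightarrow> real"
  assumes fin: "finite S" "finite A" and cd: "card S = card A"
    and le: "\<forall>x\<in>S-A. \<forall>y\<in>A-S. f x \<le> f y" and nn: "\<forall>x\<in>S\<union>A. 0 \<le> f x"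
  shows "prod f S \<le> prod f A"
proof -
  have "card (S-A) = card (A-S)"
    using fin cd by (simp add: card_Diff_subset_Int Int_commute)
  then obtain h where h: "bij_betw h (S-A) (A-S)"
    using fin by (meson finite_Diff finite_same_card_bij)
  have "prod f (S-A) \<le> prod (\<lambda>x. f (h x)) (S-A)"
  proof (rule prod_mono, safe)
    fix x assume x: "x \<in> S" "x \<notin> A"
    hence "h x \<in> A-S" using h by (auto simp: bij_betw_def)
    thus "0 \<le> f x" "f x \<le> f (h x)" using x le nn by auto
  qed
  also have "\<dots> = prod f (A-S)" using h by (rule prod.reindex_bij_betw)
  finally have 1: "prod f (S-A) \<le> prod f (A-S)" .
  have 2: "0 \<le> prod f (S \<inter> A)" using nn by (auto intro: prod_nonneg)
  have "prod f S = prod f (S \<inter> A) * prod f (S - A)" using fin(1) by (rule prod.Int_Diff)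
  also have "\<dots> \<le> prod f (S \<inter> A) * prod f (A - S)" using 1 2 by (rule mult_left_mono)
  also have "\<dots> = prod f A" using fin(2) prod.Int_Diff[of A f S] by (simp add: Int_commute)
  finally show ?thesis .
qed

lemma comb:
  fixes q :: "nat \<Rightarrow> real" and u :: "nat \<Rightarrow> nat"
  assumes q01: "\<forall>j\<in>{1..p}. 0 \<le> q j \<and> q j \<le> 1"
    and bij: "bij_betw u {1..p} {1..p}"
    and ord: "\<forall>i j. 1 \<le> i \<and> i < j \<and> j \<le> p \<longrightarrow> q (u j) \<le> q (u i)"
    and m12: "m1 \<subseteq> m2" "m2 \<subseteq> {1..p}" "card m2 - card m1 = w"
  shows "card m1 \<le> p - w \<and>
    (\<Prod>j\<in>m1. q j) * (\<Prod>j\<in>{1..p}-m2. 1 - q j)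
    \<le> (\<Prod>j\<in>u`{1..card m1}. q j) * (\<Prod>j\<in>{1..p}-u`{1..card m1 + w}. 1 - q j)"
proof -
  define k where "k = card m1"
  have fin2: "finite m2" using m12 by (auto intro: finite_subset)
  have "card m1 \<le> card m2" using fin2 m12 by (simp add: card_mono)
  hence c2: "card m2 = k + w" using m12 k_def by simp
  have "card m2 \<le> p" using card_mono[OF _ m12(2)] by simp
  hence kp: "k + w \<le> p" using c2 by simp
  have inj: "inj_on u {1..p}" using bij by (simp add: bij_betw_def)
  have img: "u ` {1..p} = {1..p}" using bij by (simp add: bij_betw_def)
  have cardu: "card (u ` {1..n}) = n" if "n \<le> p" for n
    using that inj by (subst card_image) (auto intro: inj_on_subset)
  have usub: "u ` {1..n} \<subseteq> {1..p}" if "n \<le> p" for n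
    using that img by auto
  have top: "(\<Prod>j\<in>m1. q j) \<le> (\<Prod>j\<in>u`{1..k}. q j)"
  proof (rule exch)
    show "finite m1" "finite (u`{1..k})" using fin2 m12 by (auto intro: finite_subset)
    show "card m1 = card (u ` {1..k})" using cardu kp k_def by simp
    show "\<forall>x\<in>m1 \<union> u ` {1..k}. 0 \<le> q x" using q01 m12 usub[of k] kp by auto
    show "\<forall>x\<in>m1 - u ` {1..k}. \<forall>y\<in>u ` {1..k} - m1. q x \<le> q y"
    proof (intro ballI)
      fix x y assume x: "x \<in> m1 - u ` {1..k}" and y: "y \<in> u ` {1..k} - m1"
      obtain i where i: "i \<in> {1..k}" "y = u i" using y by auto
      have "x \<in> u ` {1..p}" using x m12 img by auto
      then obtain j where j: "j \<in> {1..p}" "x = u j" by auto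
      have "j \<notin> {1..k}" using x j by auto
      hence "i < j" using i j by auto
      thus "q x \<le> q y" using ord i j by auto
    qed
  qed
  have bot: "(\<Prod>j\<in>{1..p}-m2. 1 - q j) \<le> (\<Prod>j\<in>{1..p}-u`{1..k+w}. 1 - q j)"
  proof (rule exch)
    show "finite ({1..p}-m2)" "finite ({1..p}-u`{1..k+w})" by auto
    show "card ({1..p}-m2) = card ({1..p}-u`{1..k+w})"
      using m12 usub[OF kp] cardu[OF kp] c2 by (simp add: card_Diff_subset fin2)
    show "\<forall>x\<in>({1..p}-m2) \<union> ({1..p}-u`{1..k+w}). 0 \<le> 1 - q x" using q01 by auto
    show "\<forall>x\<in>({1..p}-m2) - ({1..p}-u`{1..k+w}). \<forall>y\<in>({1..p}-u`{1..k+w}) - ({1..p}-m2). 1 - q x \<le> 1 - q y"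
    proof (intro ballI)
      fix x y assume x: "x \<in> ({1..p}-m2) - ({1..p}-u`{1..k+w})"
        and y: "y \<in> ({1..p}-u`{1..k+w}) - ({1..p}-m2)"
      obtain i where i: "i \<in> {1..k+w}" "x = u i" using x by auto
      have "y \<in> u ` {1..p}" using y img by auto
      then obtain j where j: "j \<in> {1..p}" "y = u j" by auto
      have "j \<notin> {1..k+w}" using y j by auto
      hence "i < j" using i j by auto
      thus "1 - q x \<le> 1 - q y" using ord i j by auto
    qed
  qed
  have "(\<Prod>j\<in>m1. q j) * (\<Prod>j\<in>{1..p}-m2. 1 - q j)
    \<le> (\<Prod>j\<in>u`{1..k}. q j) * (\<Prod>j\<in>{1..p}-u`{1..k+w}. 1 - q j)"
  proof (rule mult_mono[OF top bot])
    show "0 \<le> (\<Prod>j\<in>u`{1..k}. q j)" using q01 usub[of k] kp by (intro prod_nonneg) auto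
    show "0 \<le> (\<Prod>j\<in>{1..p}-m2. 1 - q j)" using q01 by (intro prod_nonneg) auto
  qed
  thus ?thesis using kp k_def by simp
qed
theorem theorem2:
  fixes p w :: nat
    and D :: "nat set pmf"
    and alg1 :: "nat \<Rightarrow> (nat \<Rightarrow> nat set) \<Rightarrow> nat set \<times> nat set"
    and u :: "nat \<Rightarrow> (nat \<Rightarrow> nat set) \<Rightarrow> nat \<Rightarrow> nat"
    and kstar :: "nat \<Rightarrow> (nat \<Rightarrow> nat set) \<Rightarrow> nat"
  assumes w_le: "w \<le> p"
    and D_supp: "\<forall>m \<in> set_pmf D. m \<subseteq> {1..p}"
    and A3: "prob_space.indep_events (measure_pmf D) (\<lambda>j. {m. j \<in> m}) {1..p}"
    and alg1_feas: "\<forall>B ms. fst (alg1 B ms) \<subseteq> snd (alg1 B ms) \<and> snd (alg1 B ms) \<subseteq> {1..p}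
                        \<and> card (snd (alg1 B ms)) - card (fst (alg1 B ms)) = w"
    and alg1_max: "\<forall>B ms m1 m2. m1 \<subseteq> m2 \<and> m2 \<subseteq> {1..p} \<and> card m2 - card m1 = w \<longrightarrow>
                        cov_rate B ms m1 m2 \<le> cov_rate B ms (fst (alg1 B ms)) (snd (alg1 B ms))"
    and u_perm: "\<forall>B ms. bij_betw (u B ms) {1..p} {1..p}"
    and u_order: "\<forall>B ms i j. 1 \<le> i \<and> i < j \<and> j \<le> p \<longrightarrow>
                        incl_freq B ms (u B ms j) \<le> incl_freq B ms (u B ms i)"
    and kstar_range: "\<forall>B ms. kstar B ms \<le> p - w"
    and kstar_max: "\<forall>B ms k. k \<le> p - w \<longrightarrow>
                        cov_rate B ms (u B ms ` {1..k}) (u B ms ` {1..k+w})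
                        \<le> cov_rate B ms (u B ms ` {1..kstar B ms}) (u B ms ` {1..kstar B ms + w})"
  shows "\<forall>\<epsilon>>0. (\<lambda>B. measure_pmf.prob (boot_sample D B)
            {ms. \<bar>cov_rate B ms (fst (alg1 B ms)) (snd (alg1 B ms))
                 - cov_rate B ms (u B ms ` {1..kstar B ms}) (u B ms ` {1..kstar B ms + w})\<bar> > \<epsilon>})
          \<longlonglongrightarrow> 0"
proof (intro allI impI)
  fix \<epsilon> :: real assume eps: "\<epsilon> > 0"
  define \<pi> where "\<pi> j = measure_pmf.prob D {m. j \<in> m}" for j
  define r where "r m1 m2 = measure_pmf.prob D {m. m1 \<subseteq> m \<and> m \<subseteq> m2}" for m1 m2
  define G where "G = (\<lambda>(i,j). \<pi> i - \<pi> j) ` {(i,j). i \<in> {1..p} \<and> j \<in> {1..p} \<and> \<pi> j < \<pi> i}"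
  have finG: "finite G" unfolding G_def
    by (rule finite_imageI, rule finite_subset[of _ "{1..p} \<times> {1..p}"]) auto
  define g where "g = Min (insert 1 G)"
  have gpos: "g > 0"
  proof -
    have "g \<in> insert 1 G" unfolding g_def using finG by (intro Min_in) auto
    thus ?thesis unfolding G_def by auto
  qed
  have gle: "g \<le> \<pi> i - \<pi> j" if "i \<in> {1..p}" "j \<in> {1..p}" "\<pi> j < \<pi> i" for i j
  proof -
    have "\<pi> i - \<pi> j \<in> G" unfolding G_def using that by force
    thus ?thesis unfolding g_def using finG by (intro Min_le) auto
  qed
  define \<delta> where "\<delta> = min (\<epsilon>/2) (g/3)"
  have dpos: "\<delta> > 0" using eps gpos by (simp add: \<delta>_def)
  have gap: "2 * \<delta> < \<pi> i - \<pi> j" if "i \<in> {1..p}" "j \<in> {1..p}" "\<pi> j < \<pi> i" for i j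
    using gle[OF that] gpos unfolding \<delta>_def by linarith
  define Pairs where "Pairs = Pow {1..p} \<times> Pow {1..p}"
  have finP: "finite Pairs" unfolding Pairs_def by simp
  define BadP where "BadP B x = {ms. \<delta> \<le> \<bar>cov_rate B ms (fst x) (snd x) - r (fst x) (snd x)\<bar>}" for B x
  define BadJ where "BadJ B j = {ms. \<delta> \<le> \<bar>incl_freq B ms j - \<pi> j\<bar>}" for B j
  define Bad where "Bad B = {ms. \<bar>cov_rate B ms (fst (alg1 B ms)) (snd (alg1 B ms))
                 - cov_rate B ms (u B ms ` {1..kstar B ms}) (u B ms ` {1..kstar B ms + w})\<bar> > \<epsilon>}" for B
  have incl: "Bad B \<subseteq> (\<Union>x\<in>Pairs. BadP B x) \<union> (\<Union>j\<in>{1..p}. BadJ B j)" for B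
  proof
    fix ms assume msB: "ms \<in> Bad B"
    show "ms \<in> (\<Union>x\<in>Pairs. BadP B x) \<union> (\<Union>j\<in>{1..p}. BadJ B j)"
    proof (rule ccontr)
      assume nb: "ms \<notin> (\<Union>x\<in>Pairs. BadP B x) \<union> (\<Union>j\<in>{1..p}. BadJ B j)"
      have hp: "\<bar>cov_rate B ms m1 m2 - r m1 m2\<bar> < \<delta>" if "m1 \<subseteq> {1..p}" "m2 \<subseteq> {1..p}" for m1 m2
      proof -
        have "(m1,m2) \<in> Pairs" using that by (simp add: Pairs_def)
        hence "ms \<notin> BadP B (m1,m2)" using nb by blast
        thus ?thesis by (simp add: BadP_def)
      qed
      have hj: "\<bar>incl_freq B ms j - \<pi> j\<bar> < \<delta>" if "j \<in> {1..p}" for j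
      proof -
        have "ms \<notin> BadJ B j" using nb that by blast
        thus ?thesis by (simp add: BadJ_def)
      qed
      define a1 where "a1 = fst (alg1 B ms)"
      define a2 where "a2 = snd (alg1 B ms)"
      define v where "v = u B ms"
      define ks where "ks = kstar B ms"
      have a: "a1 \<subseteq> a2" "a2 \<subseteq> {1..p}" "card a2 - card a1 = w"
        using alg1_feas unfolding a1_def a2_def by auto
      have bij: "bij_betw v {1..p} {1..p}" using u_perm v_def by simp
      have inj: "inj_on v {1..p}" using bij by (simp add: bij_betw_def)
      have img: "v ` {1..p} = {1..p}" using bij by (simp add: bij_betw_def)
      have ksw: "ks + w \<le> p" using kstar_range w_le ks_def by (metis le_diff_conv2 add.commute)
      have cardv: "card (v ` {1..n}) = n" if "n \<le> p" for n
        using that inj by (subst card_image) (auto intro: inj_on_subset)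
      have vsub: "v ` {1..n} \<subseteq> {1..p}" if "n \<le> p" for n
        using that img by auto
      have h1: "cov_rate B ms (v ` {1..ks}) (v ` {1..ks + w}) \<le> cov_rate B ms a1 a2"
      proof -
        have "v`{1..ks} \<subseteq> v`{1..ks+w}" by auto
        moreover have "card (v`{1..ks+w}) - card (v`{1..ks}) = w"
          using cardv[OF ksw] cardv[of ks] ksw by simp
        ultimately show ?thesis unfolding a1_def a2_def
          using alg1_max[rule_format, of "v`{1..ks}" "v`{1..ks+w}" B ms] vsub[OF ksw] by blast
      qed
      have ordp: "\<forall>i j. 1 \<le> i \<and> i < j \<and> j \<le> p \<longrightarrow> \<pi> (v j) \<le> \<pi> (v i)"
      proof (intro allI impI)
        fix i j assume ij: "1 \<le> i \<and> i < j \<and> j \<le> p"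
        have vi: "v i \<in> {1..p}" and vj: "v j \<in> {1..p}" using ij img by auto
        have fi: "incl_freq B ms (v j) \<le> incl_freq B ms (v i)" using u_order[rule_format, of i j B ms] ij unfolding v_def by simp
        show "\<pi> (v j) \<le> \<pi> (v i)"
        proof (rule ccontr)
          assume "\<not> \<pi> (v j) \<le> \<pi> (v i)"
          hence "2 * \<delta> < \<pi> (v j) - \<pi> (v i)" using gap vi vj by simp
          thus False using hj[OF vi] hj[OF vj] fi by linarith
        qed
      qed
      have q01: "\<forall>j\<in>{1..p}. 0 \<le> \<pi> j \<and> \<pi> j \<le> 1" unfolding \<pi>_def by auto
      define k0 where "k0 = card a1"
      have cmb: "k0 \<le> p - w \<and>
        (\<Prod>j\<in>a1. \<pi> j) * (\<Prod>j\<in>{1..p}-a2. 1 - \<pi> j)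
        \<le> (\<Prod>j\<in>v`{1..k0}. \<pi> j) * (\<Prod>j\<in>{1..p}-v`{1..k0 + w}. 1 - \<pi> j)"
        unfolding k0_def by (rule comb[OF q01 bij ordp a])
      have k0w: "k0 + w \<le> p" using cmb w_le by linarith
      have ra: "r a1 a2 = (\<Prod>j\<in>a1. \<pi> j) * (\<Prod>j\<in>{1..p}-a2. 1 - \<pi> j)"
        unfolding r_def \<pi>_def by (rule indep_prod[OF D_supp A3 a(1,2)])
      have sub0: "v`{1..k0} \<subseteq> v`{1..k0+w}" by auto
      have rk: "r (v`{1..k0}) (v`{1..k0+w}) = (\<Prod>j\<in>v`{1..k0}. \<pi> j) * (\<Prod>j\<in>{1..p}-v`{1..k0 + w}. 1 - \<pi> j)"
        unfolding r_def \<pi>_def by (rule indep_prod[OF D_supp A3 sub0 vsub[OF k0w]])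
      have c1: "cov_rate B ms a1 a2 < r a1 a2 + \<delta>"
      proof -
        have "a1 \<subseteq> {1..p}" using a by auto
        from hp[OF this a(2)] show ?thesis by linarith
      qed
      have de: "2 * \<delta> \<le> \<epsilon>" unfolding \<delta>_def by linarith
      have c2: "r (v`{1..k0}) (v`{1..k0+w}) < cov_rate B ms (v`{1..k0}) (v`{1..k0+w}) + \<delta>"
      proof -
        have "v`{1..k0} \<subseteq> {1..p}" using vsub[of k0] k0w by simp
        from hp[OF this vsub[OF k0w]] show ?thesis by linarith
      qed
      have c3: "cov_rate B ms (v`{1..k0}) (v`{1..k0+w}) \<le> cov_rate B ms (v ` {1..ks}) (v ` {1..ks + w})"
        using kstar_max[rule_format, of k0 B ms] cmb unfolding v_def ks_def by simp
      have "\<bar>cov_rate B ms a1 a2 - cov_rate B ms (v ` {1..ks}) (v ` {1..ks + w})\<bar> \<le> \<epsilon>"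
        using h1 c1 c2 c3 cmb ra rk de by linarith
      thus False using msB unfolding Bad_def a1_def a2_def v_def ks_def by simp
    qed
  qed
  have limP: "(\<lambda>B. measure_pmf.prob (boot_sample D B) (BadP B x)) \<longlonglongrightarrow> 0" for x
    unfolding BadP_def cov_rate_def r_def
    using conc[OF dpos, of D "\<lambda>m. fst x \<subseteq> m \<and> m \<subseteq> snd x"] by simp
  have limJ: "(\<lambda>B. measure_pmf.prob (boot_sample D B) (BadJ B j)) \<longlonglongrightarrow> 0" for j
    unfolding BadJ_def incl_freq_def \<pi>_def
    using conc[OF dpos, of D "\<lambda>m. j \<in> m"] by simp
  have lim: "(\<lambda>B. (\<Sum>x\<in>Pairs. measure_pmf.prob (boot_sample D B) (BadP B x))
     + (\<Sum>j\<in>{1..p}. measure_pmf.prob (boot_sample D B) (BadJ B j))) \<longlonglongrightarrow> 0"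
    using tendsto_add[OF tendsto_null_sum[OF limP] tendsto_null_sum[OF limJ]] by simp
  show "(\<lambda>B. measure_pmf.prob (boot_sample D B) (Bad B)) \<longlonglongrightarrow> 0"
  proof (rule Lim_null_comparison[OF _ lim], rule always_eventually, rule allI)
    fix B
    have "measure_pmf.prob (boot_sample D B) (Bad B)
      \<le> measure_pmf.prob (boot_sample D B) ((\<Union>x\<in>Pairs. BadP B x) \<union> (\<Union>j\<in>{1..p}. BadJ B j))"
      using incl by (intro measure_pmf.finite_measure_mono) auto
    also have "\<dots> \<le> measure_pmf.prob (boot_sample D B) (\<Union>x\<in>Pairs. BadP B x)
         + measure_pmf.prob (boot_sample D B) (\<Union>j\<in>{1..p}. BadJ B j)"
      by (rule measure_Un_le) auto
    also have "\<dots> \<le> (\<Sum>x\<in>Pairs. measure_pmf.prob (boot_sample D B) (BadP B x))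
     + (\<Sum>j\<in>{1..p}. measure_pmf.prob (boot_sample D B) (BadJ B j))"
      by (intro add_mono measure_pmf.finite_measure_subadditive_finite) (auto simp: finP)
    finally show "norm (measure_pmf.prob (boot_sample D B) (Bad B)) \<le> (\<Sum>x\<in>Pairs. measure_pmf.prob (boot_sample D B) (BadP B x))
     + (\<Sum>j\<in>{1..p}. measure_pmf.prob (boot_sample D B) (BadJ B j))" by simp
  qed
qed

end
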